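(* Let $\Delta=\{\mathscr J_1,\dots,\mathscr J_m\}$ be any collection of subsets of $\{1,\dots,n\}$ and let $\mathcal K=\bigcap_i\mathscr J_i$. Suppose that $Q$ is a prime ideal of $R$ containing $I_\Delta+L_{\mathcal K}$. Then for each $\mathscr J_i$ there is some $\mathscr J_j$ such that $Q$ contains $L_{\mathscr J_i\cap\mathscr J_j}$.
   Context: $\mathbb K$ is a field, $R=\mathbb K[x_{i_1,\dots,i_n}:1\le i_j\le a_j]$, $A=(x_{i_1,\dots,i_n})$ the generic table. For a tuple $\sigma$ with $\sigma_j\in\{1,\dots,a_j\}\cup\{+\}$, $x_\sigma$ is the sum of all $x_{i_1,\dots,i_n}$ with $i_j=\sigma_j$ whenever $\sigma_j\ne+$. For $\mathscr J=\{j_1<\dots<j_m\}\subseteq\{1,\dots,n\}$ the margin $A_{\mathscr J}$ is the table whose $(i_1,\dots,i_m)$ entry is $x_\sigma$ with $\sigma_{j_r}=i_r$, $\sigma_j=+$ for $j\notin\mathscr J$; $L_{\mathscr J}$ is the ideal generated by the entries of $A_{\mathscr J}$. For a table $B$ with entries in $R$, $I(B)$ is the ideal generated by its generalized $2\times2$ minors $\det\begin{pmatrix} b_{i_1,\dots,i_m} & b_{j_1,\dots,j_{l-1},i_l,j_{l+1},\dots,j_m}\\ b_{i_1,\dots,i_{l-1},j_l,i_{l+1},\dots,i_m} & b_{j_1,\dots,j_m}\end{pmatrix}$, and $I_\Delta=\sum_{\mathscr J\in\Delta}I(A_{\mathscr J})$. *)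

theory Defs
  imports Main "HOL-Library.Poly_Mapping"
begin

text \<open>Cells of an n-way table with side lengths a 1, ..., a n. A cell (i_1,...,i_n) is
  encoded as a function i :: nat => nat with 1 <= i j <= a j for j in {1..n} and i j = 0
  for j outside {1..n}.\<close>
definition cells :: "(nat \<Rightarrow> nat) \<Rightarrow> nat \<Rightarrow> (nat \<Rightarrow> nat) set" where
  "cells a n = {i. (\<forall>j\<in>{1..n}. 1 \<le> i j \<and> i j \<le> a j) \<and> (\<forall>j. j \<notin> {1..n} \<longrightarrow> i j = 0)}"

type_synonym 'k tpoly = "((nat \<Rightarrow> nat) \<Rightarrow>\<^sub>0 nat) \<Rightarrow>\<^sub>0 'k"

definition var :: "(nat \<Rightarrow> nat) \<Rightarrow> 'k::comm_ring_1 tpoly" where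
  "var i = Poly_Mapping.single (Poly_Mapping.single i 1) 1"

text \<open>The ring R = K[x_i : i a cell], as a subset of all such polynomials.\<close>
definition ringR :: "(nat \<Rightarrow> nat) \<Rightarrow> nat \<Rightarrow> 'k::comm_ring_1 tpoly set" where
  "ringR a n = {p. \<forall>m\<in>Poly_Mapping.keys p. Poly_Mapping.keys m \<subseteq> cells a n}"

definition is_ideal_in :: "'k::comm_ring_1 tpoly set \<Rightarrow> 'k tpoly set \<Rightarrow> bool" where
  "is_ideal_in R I \<longleftrightarrow> I \<subseteq> R \<and> 0 \<in> I \<and> (\<forall>x\<in>I. \<forall>y\<in>I. x + y \<in> I)
     \<and> (\<forall>r\<in>R. \<forall>x\<in>I. r * x \<in> I)"

definition is_prime_ideal_in :: "'k::comm_ring_1 tpoly set \<Rightarrow> 'k tpoly set \<Rightarrow> bool" where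
  "is_prime_ideal_in R Q \<longleftrightarrow> is_ideal_in R Q \<and> Q \<noteq> R
     \<and> (\<forall>x\<in>R. \<forall>y\<in>R. x * y \<in> Q \<longrightarrow> x \<in> Q \<or> y \<in> Q)"

definition ideal_gen :: "'k::comm_ring_1 tpoly set \<Rightarrow> 'k tpoly set \<Rightarrow> 'k tpoly set" where
  "ideal_gen R S = {\<Sum>s\<in>F. c s * s | F c. finite F \<and> F \<subseteq> S \<and> (\<forall>s\<in>F. c s \<in> R)}"

text \<open>Valid indices of the margin table A_J: functions u with 1 <= u j <= a j for j in J
  (values outside J are irrelevant).\<close>
definition marg_index :: "(nat \<Rightarrow> nat) \<Rightarrow> nat set \<Rightarrow> (nat \<Rightarrow> nat) set" where
  "marg_index a J = {u. \<forall>j\<in>J. 1 \<le> u j \<and> u j \<le> a j}"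

text \<open>Entry of the margin A_J at index u: x_sigma with sigma_j = u j for j in J and + otherwise.\<close>
definition marg :: "(nat \<Rightarrow> nat) \<Rightarrow> nat \<Rightarrow> nat set \<Rightarrow> (nat \<Rightarrow> nat) \<Rightarrow> 'k::comm_ring_1 tpoly" where
  "marg a n J u = (\<Sum>i\<in>{i\<in>cells a n. \<forall>j\<in>J. i j = u j}. var i)"

definition L_ideal :: "(nat \<Rightarrow> nat) \<Rightarrow> nat \<Rightarrow> nat set \<Rightarrow> 'k::comm_ring_1 tpoly set" where
  "L_ideal a n J = ideal_gen (ringR a n) {marg a n J u | u. u \<in> marg_index a J}"

definition minors :: "(nat \<Rightarrow> nat) \<Rightarrow> nat \<Rightarrow> nat set \<Rightarrow> 'k::comm_ring_1 tpoly set" where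
  "minors a n J = {marg a n J u * marg a n J v - marg a n J (v(l := u l)) * marg a n J (u(l := v l))
     | u v l. u \<in> marg_index a J \<and> v \<in> marg_index a J \<and> l \<in> J}"

definition I_Delta :: "(nat \<Rightarrow> nat) \<Rightarrow> nat \<Rightarrow> nat set set \<Rightarrow> 'k::comm_ring_1 tpoly set" where
  "I_Delta a n \<Delta> = ideal_gen (ringR a n) (\<Union>J\<in>\<Delta>. minors a n J)"

end

theory Submission
  imports Defs
begin

lemma ringR_add: "p \<in> ringR a n \<Longrightarrow> q \<in> ringR a n \<Longrightarrow> p + q \<in> ringR a n"
  unfolding ringR_def using keys_add[of p q] by blast

lemma ringR_mult: "p \<in> ringR a n \<Longrightarrow> q \<in> ringR a n \<Longrightarrow> (p * q :: 'k::comm_ring_1 tpoly) \<in> ringR a n"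
  unfolding ringR_def
proof (intro CollectI ballI subsetI)
  fix m x assume p: "p \<in> {p. \<forall>m\<in>Poly_Mapping.keys p. Poly_Mapping.keys m \<subseteq> cells a n}"
    and q: "q \<in> {p. \<forall>m\<in>Poly_Mapping.keys p. Poly_Mapping.keys m \<subseteq> cells a n}"
    and m: "m \<in> Poly_Mapping.keys (p*q)" and x: "x \<in> Poly_Mapping.keys m"
  from m have "m \<in> {a + b | a b. a \<in> Poly_Mapping.keys p \<and> b \<in> Poly_Mapping.keys q}"
    using keys_mult[of p q] by (rule set_mp[rotated])
  then obtain m1 m2 where mm: "m = m1 + m2" and m1: "m1 \<in> Poly_Mapping.keys p" and m2: "m2 \<in> Poly_Mapping.keys q" by blast
  have "x \<in> Poly_Mapping.keys m1 \<union> Poly_Mapping.keys m2" using x keys_add[of m1 m2] mm by blast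
  then show "x \<in> cells a n" using p q m1 m2 by blast
qed

lemma ringR_zero: "0 \<in> ringR a n" by (simp add: ringR_def)

lemma ringR_sum: "(\<And>x. x \<in> F \<Longrightarrow> f x \<in> ringR a n) \<Longrightarrow> sum f F \<in> ringR a n"
  by (induction F rule: infinite_finite_induct) (auto simp: ringR_zero ringR_add)

lemma ringR_var: "i \<in> cells a n \<Longrightarrow> (var i :: 'k::comm_ring_1 tpoly) \<in> ringR a n"
  by (cases "(1::'k) = 0") (auto simp: ringR_def var_def)

lemma ringR_marg: "marg a n J u \<in> ringR a n"
  unfolding marg_def by (rule ringR_sum) (auto intro: ringR_var)

lemma ringR_one: "(1 :: 'k::comm_ring_1 tpoly) \<in> ringR a n"
  by (cases "(1::'k tpoly) = 0") (auto simp: ringR_def)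

lemma ringR_mone: "(-1 :: 'k::comm_ring_1 tpoly) \<in> ringR a n"
  using ringR_one[where 'k='k] unfolding ringR_def by simp

lemma ideal_sum: "is_ideal_in R I \<Longrightarrow> (\<And>x. x \<in> F \<Longrightarrow> f x \<in> I) \<Longrightarrow> sum f F \<in> I"
  by (induction F rule: infinite_finite_induct) (auto simp: is_ideal_in_def)

lemma ideal_diff: "is_ideal_in (ringR a n) I \<Longrightarrow> x \<in> I \<Longrightarrow> y \<in> I \<Longrightarrow> x - y \<in> I"
proof -
  assume I: "is_ideal_in (ringR a n) I" and "x \<in> I" "y \<in> I"
  then have "(-1) * y \<in> I" using ringR_mone unfolding is_ideal_in_def by blast
  then show ?thesis using I \<open>x \<in> I\<close> unfolding is_ideal_in_def by (metis diff_conv_add_uminus mult_minus1)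
qed

lemma ideal_gen_sub: "is_ideal_in R I \<Longrightarrow> S \<subseteq> I \<Longrightarrow> ideal_gen R S \<subseteq> I"
  unfolding ideal_gen_def
proof safe
  fix F c assume I: "is_ideal_in R I" and "S \<subseteq> I" "F \<subseteq> S" "\<forall>s\<in>F. c s \<in> R"
  then show "(\<Sum>s\<in>F. c s * s) \<in> I"
    by (intro ideal_sum[OF I]) (auto simp: is_ideal_in_def)
qed

lemma gen_in_ideal_gen: "s \<in> S \<Longrightarrow> 1 \<in> R \<Longrightarrow> s \<in> ideal_gen R S"
  unfolding ideal_gen_def
  by (rule CollectI, rule exI[of _ "{s}"], rule exI[of _ "\<lambda>_. 1"]) simp


definition U :: "(nat \<Rightarrow> nat) \<Rightarrow> nat set \<Rightarrow> (nat \<Rightarrow> nat) set" where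
  "U a J = {u. (\<forall>j\<in>J. 1 \<le> u j \<and> u j \<le> a j) \<and> (\<forall>j. j \<notin> J \<longrightarrow> u j = 0)}"

lemma finite_U: assumes "finite J" shows "finite (U a J)"
proof -
  have "U a J \<subseteq> {f. \<forall>x. (x \<in> J \<longrightarrow> f x \<in> (\<Union>j\<in>J. {..a j})) \<and> (x \<notin> J \<longrightarrow> f x = 0)}"
    unfolding U_def by auto
  moreover have "finite {f. \<forall>x. (x \<in> J \<longrightarrow> f x \<in> (\<Union>j\<in>J. {..a j})) \<and> (x \<notin> J \<longrightarrow> f x = (0::nat))}"
    by (rule finite_set_of_finite_funs) (use assms in auto)
  ultimately show ?thesis by (rule finite_subset)
qed

lemma cells_U: "cells a n = U a {1..n}"
  unfolding cells_def U_def by auto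

lemma U_marg_index: "U a J \<subseteq> marg_index a J"
  unfolding U_def marg_index_def by auto

lemma marg_decomp:
  assumes "S \<subseteq> J" "J \<subseteq> {1..n}"
  shows "marg a n S w = (\<Sum>u\<in>{u\<in>U a J. \<forall>j\<in>S. u j = w j}. (marg a n J u :: 'k::comm_ring_1 tpoly))"
proof -
  let ?C = "{i\<in>cells a n. \<forall>j\<in>S. i j = w j}"
  let ?B = "{u\<in>U a J. \<forall>j\<in>S. u j = w j}"
  let ?g = "\<lambda>i. (\<lambda>j. if j \<in> J then i j else 0)"
  have fJ: "finite J" using assms(2) finite_subset by blast
  have fC: "finite ?C" using finite_U[of "{1..n}" a] by (simp add: cells_U)
  have fB: "finite ?B" using finite_U[OF fJ, of a] by simp
  have gC: "?g ` ?C \<subseteq> ?B" using assms unfolding cells_def U_def by auto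
  have "marg a n S w = (\<Sum>i\<in>?C. (var i :: 'k tpoly))" by (simp add: marg_def)
  also have "\<dots> = (\<Sum>u\<in>?B. \<Sum>i\<in>{x. x \<in> ?C \<and> ?g x = u}. var i)"
    by (rule sum.group[OF fC fB gC, symmetric])
  also have "\<dots> = (\<Sum>u\<in>?B. marg a n J u)"
  proof (rule sum.cong[OF refl])
    fix u assume u: "u \<in> ?B"
    have "{x. x \<in> ?C \<and> ?g x = u} = {i\<in>cells a n. \<forall>j\<in>J. i j = u j}"
    proof (intro set_eqI iffI)
      fix x assume "x \<in> {x. x \<in> ?C \<and> ?g x = u}"
      then show "x \<in> {i\<in>cells a n. \<forall>j\<in>J. i j = u j}" by (auto simp: fun_eq_iff) (metis (full_types))
    next
      fix x assume x: "x \<in> {i\<in>cells a n. \<forall>j\<in>J. i j = u j}"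
      then have "?g x = u" using u unfolding U_def by (auto simp: fun_eq_iff)
      moreover have "\<forall>j\<in>S. x j = w j" using x u assms by auto
      ultimately show "x \<in> {x. x \<in> ?C \<and> ?g x = u}" using x by auto
    qed
    then show "(\<Sum>i\<in>{x. x \<in> ?C \<and> ?g x = u}. var i) = marg a n J u" by (simp add: marg_def)
  qed
  finally show ?thesis .
qed


lemma step:
  fixes Q :: "'k::field tpoly set"
  assumes Q: "is_prime_ideal_in (ringR a n) Q" and Jn: "J \<subseteq> {1..n}" and SJ: "S \<subseteq> J"
    and lJ: "l \<in> J" and lS: "l \<notin> S" and mQ: "minors a n J \<subseteq> Q" and LS: "L_ideal a n S \<subseteq> Q"
  shows "L_ideal a n (insert l S) \<subseteq> Q \<or> L_ideal a n (J - {l}) \<subseteq> Q"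
proof (rule disjCI)
  have I: "is_ideal_in (ringR a n) Q" using Q by (simp add: is_prime_ideal_in_def)
  assume nL: "\<not> L_ideal a n (J - {l}) \<subseteq> Q"
  have "\<not> {marg a n (J - {l}) u | u. u \<in> marg_index a (J - {l})} \<subseteq> Q"
  proof
    assume "{marg a n (J - {l}) u | u. u \<in> marg_index a (J - {l})} \<subseteq> Q"
    then have "L_ideal a n (J - {l}) \<subseteq> Q" unfolding L_ideal_def by (rule ideal_gen_sub[OF I])
    then show False using nL by (rule notE[rotated])
  qed
  then obtain y where "y \<in> {marg a n (J - {l}) u | u. u \<in> marg_index a (J - {l})}" "y \<notin> Q"
    by (meson subsetI)
  then obtain v where v: "v \<in> marg_index a (J - {l})" and ny: "marg a n (J - {l}) v \<notin> Q"
    by (auto simp only: mem_Collect_eq)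
  show "L_ideal a n (insert l S) \<subseteq> Q"
    unfolding L_ideal_def
  proof (rule ideal_gen_sub[OF I], safe)
    fix w assume w: "w \<in> marg_index a (insert l S)"
    define b where "b = (marg a n J :: (nat \<Rightarrow> nat) \<Rightarrow> 'k tpoly)"
    define k where "k = w l"
    define A where "A = {u\<in>U a J. \<forall>j\<in>insert l S. u j = w j}"
    define B where "B = {u\<in>U a J. \<forall>j\<in>J - {l}. u j = v j}"
    define C where "C = {u\<in>U a J. \<forall>j\<in>S. u j = w j}"
    define v0 where "v0 = (\<lambda>j. if j = l then k else if j \<in> J then v j else 0)"
    define \<phi> where "\<phi> = (\<lambda>p::(nat\<Rightarrow>nat)\<times>(nat\<Rightarrow>nat). (fst p)(l := snd p l))"
    define mi where "mi = (\<lambda>p::(nat\<Rightarrow>nat)\<times>(nat\<Rightarrow>nat). b (fst p) * b (snd p) - b ((snd p)(l := fst p l)) * b ((fst p)(l := snd p l)))"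
    have fJ: "finite J" using Jn finite_subset by blast
    have fA: "finite A" unfolding A_def using finite_U[OF fJ, of a] by simp
    have fB: "finite B" unfolding B_def using finite_U[OF fJ, of a] by simp
    have kb: "1 \<le> k \<and> k \<le> a l" using w unfolding marg_index_def k_def by auto
    have x: "marg a n (insert l S) w = sum b A"
      unfolding A_def b_def by (rule marg_decomp) (use SJ lJ Jn in auto)
    have y: "marg a n (J - {l}) v = sum b B"
      unfolding B_def b_def by (rule marg_decomp) (use Jn in auto)
    have z: "marg a n S w = sum b C"
      unfolding C_def b_def by (rule marg_decomp) (use SJ Jn in auto)
    have v0eq: "(snd p)(l := fst p l) = v0" if "p \<in> A \<times> B" for p
      using that lJ unfolding A_def B_def U_def v0_def k_def by (auto simp: fun_eq_iff)
    have inj: "inj_on \<phi> (A \<times> B)"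
    proof (rule inj_onI)
      fix p q assume p: "p \<in> A \<times> B" and q: "q \<in> A \<times> B" and e: "\<phi> p = \<phi> q"
      have 1: "fst p = fst q"
      proof
        fix j show "fst p j = fst q j"
          using p q fun_cong[OF e, of j] unfolding \<phi>_def A_def by (cases "j = l") auto
      qed
      have 2: "snd p = snd q"
      proof
        fix j show "snd p j = snd q j"
          using p q fun_cong[OF e, of l] unfolding \<phi>_def B_def U_def
          by (cases "j = l"; cases "j \<in> J") auto
      qed
      show "p = q" using 1 2 by (simp add: prod_eq_iff)
    qed
    have img: "\<phi> ` (A \<times> B) = C"
    proof
      show "\<phi> ` (A \<times> B) \<subseteq> C"
        using lJ lS unfolding \<phi>_def A_def B_def C_def U_def by auto
    next
      show "C \<subseteq> \<phi> ` (A \<times> B)"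
      proof
        fix z assume zC: "z \<in> C"
        have "z(l := k) \<in> A" using zC kb lJ unfolding A_def C_def U_def k_def by auto
        moreover have "v0(l := z l) \<in> B" using zC v lJ unfolding B_def C_def U_def v0_def marg_index_def by auto
        moreover have "\<phi> (z(l := k), v0(l := z l)) = z" unfolding \<phi>_def by auto
        ultimately show "z \<in> \<phi> ` (A \<times> B)" by (metis SigmaI image_eqI)
      qed
    qed
    have "sum b A * sum b B = (\<Sum>p\<in>A \<times> B. b (fst p) * b (snd p))"
      by (simp add: sum_product sum.cartesian_product case_prod_beta)
    also have "\<dots> = (\<Sum>p\<in>A \<times> B. mi p + b v0 * b (\<phi> p))"
      by (rule sum.cong[OF refl]) (simp add: mi_def v0eq \<phi>_def)
    also have "\<dots> = sum mi (A \<times> B) + b v0 * (\<Sum>p\<in>A \<times> B. b (\<phi> p))"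
      by (simp add: sum.distrib sum_distrib_left)
    also have "(\<Sum>p\<in>A \<times> B. b (\<phi> p)) = sum b C"
      using sum.reindex[OF inj, of b] img by simp
    finally have xy: "marg a n (insert l S) w * marg a n (J - {l}) v = sum mi (A \<times> B) + b v0 * marg a n S w"
      using x y z by simp
    have "sum mi (A \<times> B) \<in> Q"
    proof (rule ideal_sum[OF I])
      fix p assume p: "p \<in> A \<times> B"
      then have "fst p \<in> marg_index a J" "snd p \<in> marg_index a J"
        using U_marg_index[of a J] unfolding A_def B_def by auto
      then have "mi p \<in> minors a n J" unfolding mi_def b_def minors_def using lJ by blast
      then show "mi p \<in> Q" using mQ by blast
    qed
    moreover have "marg a n S w \<in> Q"
    proof -
      have "w \<in> marg_index a S" using w unfolding marg_index_def by auto
      then have "marg a n S w \<in> L_ideal a n S" unfolding L_ideal_def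
        by (intro gen_in_ideal_gen ringR_one) blast
      then show ?thesis using LS by blast
    qed
    then have "b v0 * marg a n S w \<in> Q" using I ringR_marg unfolding is_ideal_in_def b_def by blast
    ultimately have "marg a n (insert l S) w * marg a n (J - {l}) v \<in> Q"
      using I xy unfolding is_ideal_in_def by simp
    then show "marg a n (insert l S) w \<in> Q"
      using Q ny ringR_marg unfolding is_prime_ideal_in_def by blast
  qed
qed

lemma iter:
  fixes Q :: "'k::field tpoly set"
  assumes Q: "is_prime_ideal_in (ringR a n) Q" and Jn: "J \<subseteq> {1..n}" and KJ: "K \<subseteq> J"
    and mQ: "minors a n J \<subseteq> Q" and LK: "L_ideal a n K \<subseteq> Q"
  shows "L_ideal a n J \<subseteq> Q \<or> (\<exists>l\<in>J - K. L_ideal a n (J - {l}) \<subseteq> Q)"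
proof -
  have fJ: "finite J" using Jn finite_subset by blast
  have "finite T \<Longrightarrow> T \<subseteq> J - K \<Longrightarrow> L_ideal a n (K \<union> T) \<subseteq> Q \<or> (\<exists>l\<in>J - K. L_ideal a n (J - {l}) \<subseteq> Q)" for T
  proof (induction T rule: finite_induct)
    case empty then show ?case using LK by simp
  next
    case (insert x T)
    then have IH: "L_ideal a n (K \<union> T) \<subseteq> Q \<or> (\<exists>l\<in>J - K. L_ideal a n (J - {l}) \<subseteq> Q)" by blast
    show ?case
    proof (cases "L_ideal a n (K \<union> T) \<subseteq> Q")
      case True
      have "L_ideal a n (insert x (K \<union> T)) \<subseteq> Q \<or> L_ideal a n (J - {x}) \<subseteq> Q"
      proof (rule step[OF Q Jn _ _ _ mQ True])
        show "K \<union> T \<subseteq> J" using insert.prems KJ by blast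
        show "x \<in> J" using insert.prems by blast
        show "x \<notin> K \<union> T" using insert.prems insert.hyps(2) by blast
      qed
      moreover have "K \<union> insert x T = insert x (K \<union> T)" by blast
      moreover have "x \<in> J - K" using insert.prems by blast
      ultimately show ?thesis by metis
    next
      case False then show ?thesis using IH by blast
    qed
  qed
  moreover have "K \<union> (J - K) = J" using KJ by blast
  ultimately show ?thesis using fJ by (metis finite_Diff order_refl)
qed
lemma mono_L:
  fixes Q :: "'k::field tpoly set"
  assumes I: "is_ideal_in (ringR a n) Q" and Jn: "J \<subseteq> {1..n}" and SJ: "S \<subseteq> J"
    and LJ: "L_ideal a n J \<subseteq> Q"
  shows "L_ideal a n S \<subseteq> Q"
  unfolding L_ideal_def
proof (rule ideal_gen_sub[OF I], safe)
  fix w assume "w \<in> marg_index a S"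
  have "marg a n S w = (\<Sum>u\<in>{u\<in>U a J. \<forall>j\<in>S. u j = w j}. (marg a n J u :: 'k tpoly))"
    by (rule marg_decomp[OF SJ Jn])
  also have "\<dots> \<in> Q"
  proof (rule ideal_sum[OF I])
    fix u assume "u \<in> {u\<in>U a J. \<forall>j\<in>S. u j = w j}"
    then have "u \<in> marg_index a J" using U_marg_index by auto
    then have "marg a n J u \<in> L_ideal a n J" unfolding L_ideal_def
      by (intro gen_in_ideal_gen ringR_one) blast
    then show "marg a n J u \<in> Q" using LJ by blast
  qed
  finally show "marg a n S w \<in> Q" .
qed

theorem lemma6p3:
  fixes a :: "nat \<Rightarrow> nat" and n :: nat and \<Delta> :: "nat set set"
    and Q :: "'k::field tpoly set"
  assumes "finite \<Delta>" and "\<Delta> \<noteq> {}" and "\<forall>J\<in>\<Delta>. J \<subseteq> {1..n}"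
    and "is_prime_ideal_in (ringR a n) Q"
    and "I_Delta a n \<Delta> \<subseteq> Q" and "L_ideal a n (\<Inter>\<Delta>) \<subseteq> Q"
  shows "\<forall>J\<in>\<Delta>. \<exists>J'\<in>\<Delta>. L_ideal a n (J \<inter> J') \<subseteq> Q"
proof
  fix J assume J: "J \<in> \<Delta>"
  have I: "is_ideal_in (ringR a n) Q" using assms(4) by (simp add: is_prime_ideal_in_def)
  have Jn: "J \<subseteq> {1..n}" using assms(3) J by blast
  have mQ: "minors a n J \<subseteq> Q"
  proof
    fix m :: "'k tpoly" assume "m \<in> minors a n J"
    then have "m \<in> I_Delta a n \<Delta>" unfolding I_Delta_def using J
      by (intro gen_in_ideal_gen ringR_one) blast
    then show "m \<in> Q" using assms(5) by blast
  qed
  have "L_ideal a n J \<subseteq> Q \<or> (\<exists>l\<in>J - \<Inter>\<Delta>. L_ideal a n (J - {l}) \<subseteq> Q)"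
    by (rule iter[OF assms(4) Jn _ mQ assms(6)]) (use J in blast)
  then show "\<exists>J'\<in>\<Delta>. L_ideal a n (J \<inter> J') \<subseteq> Q"
  proof
    assume "L_ideal a n J \<subseteq> Q" then show ?thesis using J by (metis Int_absorb)
  next
    assume "\<exists>l\<in>J - \<Inter>\<Delta>. L_ideal a n (J - {l}) \<subseteq> Q"
    then obtain l J' where l: "l \<in> J" "J' \<in> \<Delta>" "l \<notin> J'" and L: "L_ideal a n (J - {l}) \<subseteq> Q" by blast
    have "L_ideal a n (J \<inter> J') \<subseteq> Q"
      by (rule mono_L[OF I _ _ L]) (use Jn l in auto)
    then show ?thesis using l by blast
  qed
qed

end
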